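(* Let $P$ be a domain and $D\ge 2$ an integer. Let $C\subseteq P$ be a comb with root $p$, where $p$ is a boundary pixel of $P$, and suppose that $\mathrm{vdist}(q)=1+|x_q-x_p|+|y_q-y_p|$ for every $q\in C$, where $(x_q,y_q)$ denotes the lower-left corner of pixel $q$. Suppose each pixel of $C\setminus\{p\}$ carries exactly one unit of snow, $p$ carries none, and the snowblower stands on $p$. Let $\Delta=\frac1D\sum_{q\in C\setminus\{p\}}\mathrm{vdist}(q)$. Then in the default model there is a sequence of moves obeying the capacity constraint, in which the snowblower only visits pixels of $C$ and snow is only thrown onto pixels of $C$ or out of $P$, which ends with the snowblower on $p$ and no pixel of $C$ carrying snow, and whose number of moves is at most $4|C\setminus\{p\}|+4\Delta$ if $D\ge4$ and at most $4|C\setminus\{p\}|+2\Delta$ if $D\in\{2,3\}$.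
   Context: A pixel is a closed unit square $[i,i+1]\times[j,j+1]$, $i,j\in\mathbb{Z}$, identified with its lower-left corner $(i,j)$; two pixels are adjacent if they share a side. The domain $P$ is a finite set of pixels whose dual graph $G_P$ (vertex per pixel, edges between adjacent pixels) is connected. A boundary side is a side of a pixel of $P$ not shared with another pixel of $P$; a boundary pixel is a pixel of $P$ with a boundary side. For $q\in P$, $\mathrm{vdist}(q)=1+\min_{b}\mathrm{dist}_{G_P}(q,b)$, the minimum over boundary pixels $b$ of $P$. A (horizontal) comb is a set of pixels of the form $C=\{(x,y): y_0\le y\le y_0+H-1,\ a_y\le x\le c\}$ (a leftward comb) or $C=\{(x,y): y_0\le y\le y_0+H-1,\ c\le x\le a_y\}$ (a rightward comb), for integers $y_0$, $H\ge1$, $c$ and $a_y$ ($a_y\le c$, resp. $a_y\ge c$); its handle is the column $\{(c,y): y_0\le y\le y_0+H-1\}$, its teeth are the rows, and its root is either $(c,y_0)$ or $(c,y_0+H-1)$. A move (default model): the snowblower goes from its pixel $v$ to an adjacent pixel $u\in P$, and upon entering $u$ all snow on $u$ is thrown onto any chosen one of the four pixels adjacent to $u$ (including $v$); if that pixel is not in $P$ the snow disappears, otherwise it is added to the snow there. Capacity constraint: at all times every pixel of $P$ carries at most $D$ units of snow. *)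

theory Defs
  imports Complex_Main
begin

text \<open>A pixel is identified with its lower-left corner.\<close>
type_synonym pixel = "int \<times> int"

definition adj :: "pixel \<Rightarrow> pixel \<Rightarrow> bool" where
  "adj a b \<longleftrightarrow> \<bar>fst a - fst b\<bar> + \<bar>snd a - snd b\<bar> = 1"

definition is_path :: "pixel set \<Rightarrow> pixel list \<Rightarrow> bool" where
  "is_path P xs \<longleftrightarrow> xs \<noteq> [] \<and> set xs \<subseteq> P \<and>
     (\<forall>i. Suc i < length xs \<longrightarrow> adj (xs ! i) (xs ! Suc i))"

definition domain :: "pixel set \<Rightarrow> bool" where
  "domain P \<longleftrightarrow> finite P \<and> P \<noteq> {} \<and>
     (\<forall>a\<in>P. \<forall>b\<in>P. \<exists>xs. is_path P xs \<and> hd xs = a \<and> last xs = b)"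

definition gdist :: "pixel set \<Rightarrow> pixel \<Rightarrow> pixel \<Rightarrow> nat" where
  "gdist P a b = (LEAST n. \<exists>xs. is_path P xs \<and> hd xs = a \<and> last xs = b \<and> length xs = Suc n)"

text \<open>A boundary pixel has a side not shared with another pixel of P,
  i.e. some adjacent pixel lies outside P.\<close>
definition boundary_pixel :: "pixel set \<Rightarrow> pixel \<Rightarrow> bool" where
  "boundary_pixel P q \<longleftrightarrow> q \<in> P \<and> (\<exists>r. adj q r \<and> r \<notin> P)"

definition vdist :: "pixel set \<Rightarrow> pixel \<Rightarrow> nat" where
  "vdist P q = 1 + Min {gdist P q b | b. boundary_pixel P b}"

text \<open>Horizontal comb with handle column c, rows y0..y0+H-1, and root p.\<close>
definition comb_with_root :: "pixel set \<Rightarrow> pixel \<Rightarrow> bool" where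
  "comb_with_root C p \<longleftrightarrow> (\<exists>y0 H c a. H \<ge> (1::int) \<and>
     ((C = {(x, y). y0 \<le> y \<and> y \<le> y0 + H - 1 \<and> a y \<le> x \<and> x \<le> c} \<and>
        (\<forall>y. y0 \<le> y \<and> y \<le> y0 + H - 1 \<longrightarrow> a y \<le> c)) \<or>
      (C = {(x, y). y0 \<le> y \<and> y \<le> y0 + H - 1 \<and> c \<le> x \<and> x \<le> a y} \<and>
        (\<forall>y. y0 \<le> y \<and> y \<le> y0 + H - 1 \<longrightarrow> c \<le> a y))) \<and>
     (p = (c, y0) \<or> p = (c, y0 + H - 1)))"

text \<open>Snow after the snowblower enters u and throws all snow on u onto t.\<close>
definition throw :: "pixel set \<Rightarrow> (pixel \<Rightarrow> nat) \<Rightarrow> pixel \<Rightarrow> pixel \<Rightarrow> (pixel \<Rightarrow> nat)" where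
  "throw P s u t = (if t \<in> P then (s(u := 0))(t := s t + s u) else s(u := 0))"

text \<open>A valid move sequence of n moves in the default model: positions pos 0..n,
  throw targets tgt 0..n-1, snow states snow 0..n.\<close>
definition valid_run :: "pixel set \<Rightarrow> nat \<Rightarrow> nat \<Rightarrow> (nat \<Rightarrow> pixel) \<Rightarrow> (nat \<Rightarrow> pixel)
    \<Rightarrow> (nat \<Rightarrow> pixel \<Rightarrow> nat) \<Rightarrow> bool" where
  "valid_run P D n pos tgt snow \<longleftrightarrow>
     (\<forall>i<n. adj (pos i) (pos (Suc i)) \<and> pos (Suc i) \<in> P \<and>
            adj (pos (Suc i)) (tgt i) \<and>
            snow (Suc i) = throw P (snow i) (pos (Suc i)) (tgt i)) \<and>
     (\<forall>i\<le>n. \<forall>q\<in>P. snow i q \<le> D)"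

end

theory Submission
  imports Defs
begin

definition pileok :: "nat \<Rightarrow> 'a \<Rightarrow> 'a list \<Rightarrow> bool" where
  "pileok D p W \<longleftrightarrow> (\<forall>i. Suc i < length W \<longrightarrow>
     (\<exists>j\<le>i. W ! j = p \<and> card (set (take (Suc (Suc i)) W) - set (take (Suc j) W)) \<le> D))"

primrec lpf :: "'a list \<Rightarrow> 'a \<Rightarrow> nat \<Rightarrow> nat" where
  "lpf W p 0 = 0"
| "lpf W p (Suc i) = (if W ! Suc i = p then Suc i else lpf W p i)"

lemma lpf_le: "lpf W p i \<le> i"
  by (induction i) auto

lemma lpf_ge: "j \<le> i \<Longrightarrow> W ! j = p \<Longrightarrow> j \<le> lpf W p i"
proof (induction i)
  case 0 then show ?case by simp
next
  case (Suc i)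
  then show ?case by (cases "j = Suc i") auto
qed

lemma set_take_mono: "a \<le> b \<Longrightarrow> set (take a W) \<subseteq> set (take b W)"
  by (metis set_take_subset_set_take)

lemma set_take_Suc: "i < length W \<Longrightarrow> set (take (Suc i) W) = insert (W ! i) (set (take i W))"
  by (simp add: take_Suc_conv_app_nth)

lemma adj_neq: "adj a b \<Longrightarrow> a \<noteq> b"
  by (auto simp: adj_def)

lemma sim:
  fixes W :: "pixel list" and s0 :: "pixel \<Rightarrow> nat"
  assumes W: "W \<noteq> []" "W ! 0 = p" "last W = p"
   and adjW: "successively adj W"
   and sub: "set W \<subseteq> C" "C \<subseteq> P" and r: "adj p r" "r \<notin> P"
   and s0P: "\<forall>q\<in>P. s0 q \<le> D" and s0p: "s0 p = 0" and s0C: "\<forall>q\<in>C. s0 q \<le> 1"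
   and pk: "pileok D p W"
  shows "\<exists>pos tgt snow. valid_run P D (length W - 1) pos tgt snow \<and> pos 0 = p \<and> snow 0 = s0 \<and>
    (\<forall>i<length W - 1. pos (Suc i) \<in> C \<and> (tgt i \<in> C \<or> tgt i \<notin> P)) \<and>
    pos (length W - 1) = p \<and> (\<forall>q\<in>set W. snow (length W - 1) q = 0)"
proof -
  define n where "n = length W - 1"
  have Wn: "W ! n = p" using W by (simp add: n_def last_conv_nth)
  have ln: "length W = Suc n" using W by (simp add: n_def)
  define tgt where "tgt i = (if W ! Suc i = p then r else W ! Suc (Suc i))" for i
  define snow where "snow = rec_nat s0 (\<lambda>i s. throw P s (W ! Suc i) (tgt i))"
  have snow0: "snow 0 = s0" by (simp add: snow_def)
  have snowS: "snow (Suc i) = throw P (snow i) (W ! Suc i) (tgt i)" for i by (simp add: snow_def)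
  define V where "V i = set (take (Suc i) W)" for i
  define lp where "lp = lpf W p"
  define S where "S i q = (if i < n \<and> q = W ! Suc i then (\<Sum>x\<in>V (Suc i) - V (lp i). s0 x)
       else if q \<in> V i then 0 else s0 q)" for i q
  have adjn: "adj (W ! i) (W ! Suc i)" if "i < n" for i
    using successively_nth[OF adjW] that ln by simp
  have inC: "W ! i \<in> C" if "i \<le> n" for i using sub(1) that ln nth_mem[of i W] by auto
  have VS: "V (Suc i) = insert (W ! Suc i) (V i)" if "i < n" for i
    unfolding V_def using that ln set_take_Suc[of "Suc i" W] by simp
  have Vmono: "a \<le> b \<Longrightarrow> V a \<subseteq> V b" for a b unfolding V_def by (rule set_take_mono) simp
  have finV: "finite (V i)" for i by (simp add: V_def)
  have V0: "V 0 = {p}" using W by (simp add: V_def take_Suc hd_conv_nth)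
  have Vn: "V n = set W" using ln by (simp add: V_def)
  have inv: "i \<le> n \<Longrightarrow> snow i = S i" for i
  proof (induction i)
    case 0
    have "W ! Suc 0 \<noteq> p" if "0 < n" using adj_neq[OF adjn[OF that]] W by auto
    moreover have "V (Suc 0) - V 0 = {W ! Suc 0}" if "0 < n" using VS[OF that] V0 \<open>0 < n \<Longrightarrow> W ! Suc 0 \<noteq> p\<close>[OF that] by auto
    ultimately show ?case using s0p by (auto simp: fun_eq_iff S_def snow0 lp_def V0)
  next
    case (Suc i)
    hence IH: "snow i = S i" and i: "i < n" by auto
    define u where "u = W ! Suc i"
    show ?case
    proof (cases "u = p")
      case True
      have tg: "tgt i = r" using True by (simp add: tgt_def u_def)
      have lpS: "lp (Suc i) = Suc i" using True by (simp add: lp_def u_def)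
      have sn: "snow (Suc i) = (snow i)(u := 0)" using tg r by (simp add: snowS throw_def u_def)
      show ?thesis
      proof
        fix q
        show "snow (Suc i) q = S (Suc i) q"
        proof (cases "Suc i < n \<and> q = W ! Suc (Suc i)")
          case True
          have ne: "q \<noteq> u" using adj_neq[OF adjn[of "Suc i"]] True by (auto simp: u_def)
          have "V (Suc (Suc i)) - V (Suc i) = (if q \<in> V (Suc i) then {} else {q})"
            using VS[of "Suc i"] True by auto
          then show ?thesis using True ne IH lpS VS[OF i] sn
            by (auto simp: S_def u_def)
        next
          case False
          then show ?thesis using IH sn VS[OF i] i by (auto simp: S_def u_def)
        qed
      qed
    next
      case False
      have i2: "Suc i < n" using False Wn i u_def by (metis le_neq_implies_less Suc_leI)
      define t where "t = W ! Suc (Suc i)"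
      have tg: "tgt i = t" using False by (simp add: tgt_def u_def t_def)
      have tP: "t \<in> P" using inC[of "Suc (Suc i)"] i2 sub by (auto simp: t_def)
      have tu: "t \<noteq> u" using adj_neq[OF adjn[OF i2]] by (simp add: t_def u_def)
      have lpS: "lp (Suc i) = lp i" using False by (simp add: lp_def u_def)
      have sn: "snow (Suc i) = (snow i)(u := 0, t := snow i t + snow i u)"
        using tg tP by (simp add: snowS throw_def u_def)
      have Su: "S i u = (\<Sum>x\<in>V (Suc i) - V (lp i). s0 x)" using i by (simp add: S_def u_def)
      have lpsub: "V (lp i) \<subseteq> V (Suc i)" using Vmono[of "lp i" "Suc i"] lpf_le[of W p i]
        by (simp add: lp_def)
      have VSS: "V (Suc (Suc i)) = insert t (V (Suc i))" using VS[OF i2] by (simp add: t_def)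
      show ?thesis
      proof
        fix q
        show "snow (Suc i) q = S (Suc i) q"
        proof (cases "q = t")
          case True
          show ?thesis
          proof (cases "t \<in> V (Suc i)")
            case True
            then have "t \<in> V i" using VS[OF i] tu by (auto simp: u_def)
            then have "S i t = 0" using tu by (auto simp: S_def u_def)
            then show ?thesis using \<open>q = t\<close> True sn Su lpS VSS i2 IH
              by (simp add: S_def t_def insert_absorb)
          next
            case False
            then have "t \<notin> V i" using VS[OF i] by auto
            then have "S i t = s0 t" using tu by (auto simp: S_def u_def)
            moreover have "V (Suc (Suc i)) - V (lp i) = insert t (V (Suc i) - V (lp i))"
              using VSS False lpsub by auto
            moreover have "t \<notin> V (Suc i) - V (lp i)" using False by auto
            ultimately show ?thesis using \<open>q = t\<close> sn Su lpS i2 IH finV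
              by (simp add: S_def t_def)
          qed
        next
          case False
          then show ?thesis using IH sn VS[OF i] VSS i i2 lpS tu
            by (auto simp: S_def u_def t_def)
        qed
      qed
    qed
  qed
  have cap: "S i q \<le> D" if "i \<le> n" "q \<in> P" for i q
  proof (cases "i < n \<and> q = W ! Suc i")
    case True
    then have i: "Suc i < length W" using ln by simp
    obtain j where j: "j \<le> i" "W ! j = p" and cj: "card (V (Suc i) - V j) \<le> D"
      using pk i unfolding pileok_def V_def by blast
    have "V j \<subseteq> V (lp i)" using Vmono lpf_ge[OF j] by (simp add: lp_def)
    then have "card (V (Suc i) - V (lp i)) \<le> card (V (Suc i) - V j)"
      by (intro card_mono) (auto simp: finV)
    moreover have "(\<Sum>x\<in>V (Suc i) - V (lp i). s0 x) \<le> (\<Sum>x\<in>V (Suc i) - V (lp i). 1)"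
    proof (rule sum_mono)
      fix x assume "x \<in> V (Suc i) - V (lp i)"
      then have "x \<in> set W" using set_take_subset[of "Suc (Suc i)" W] by (auto simp: V_def)
      then show "s0 x \<le> 1" using s0C sub by auto
    qed
    ultimately show ?thesis using True cj by (simp add: S_def)
  next
    case False
    then show ?thesis using s0P that by (auto simp: S_def)
  qed
  show ?thesis
  proof (intro exI conjI)
    show "valid_run P D (length W - 1) ((!) W) tgt snow"
      unfolding valid_run_def n_def[symmetric]
    proof (intro conjI allI impI ballI)
      fix i assume i: "i < n"
      show "adj (W ! i) (W ! Suc i)" using adjn[OF i] .
      show "W ! Suc i \<in> P" using inC[of "Suc i"] i sub by auto
      show "adj (W ! Suc i) (tgt i)"
      proof (cases "W ! Suc i = p")
        case True then show ?thesis using r by (simp add: tgt_def)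
      next
        case False
        then have "Suc i < n" using Wn i by (metis le_neq_implies_less Suc_leI)
        then show ?thesis using adjn False by (simp add: tgt_def)
      qed
      show "snow (Suc i) = throw P (snow i) (W ! Suc i) (tgt i)" by (rule snowS)
    next
      fix i q assume "i \<le> n" "q \<in> P"
      then show "snow i q \<le> D" using inv cap by simp
    qed
    show "W ! 0 = p" by (rule W(2))
    show "snow 0 = s0" by (rule snow0)
    show "\<forall>i<length W - 1. W ! Suc i \<in> C \<and> (tgt i \<in> C \<or> tgt i \<notin> P)"
      unfolding n_def[symmetric]
    proof (intro allI impI conjI)
      fix i assume i: "i < n"
      show "W ! Suc i \<in> C" using inC i by simp
      show "tgt i \<in> C \<or> tgt i \<notin> P"
      proof (cases "W ! Suc i = p")
        case True then show ?thesis using r by (simp add: tgt_def)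
      next
        case False
        then have "Suc i < n" using Wn i by (metis le_neq_implies_less Suc_leI)
        then show ?thesis using inC False by (simp add: tgt_def)
      qed
    qed
    show "W ! (length W - 1) = p" using Wn by (simp add: n_def)
    show "\<forall>q\<in>set W. snow (length W - 1) q = 0"
    proof -
      have e: "length W - 1 = n" by (simp add: n_def)
      show ?thesis unfolding e using inv[of n] Vn by (simp add: S_def)
    qed
  qed
qed


definition dst :: "nat \<Rightarrow> nat \<Rightarrow> nat" where
  "dst a b = (if a \<le> b then b - a else a - b)"

definition seg :: "nat \<Rightarrow> nat \<Rightarrow> nat list" where
  "seg a b = (if a \<le> b then [a..<Suc b] else rev [b..<Suc a])"

definition nadj :: "nat \<times> nat \<Rightarrow> nat \<times> nat \<Rightarrow> bool" where
  "nadj x y \<longleftrightarrow> (fst x = fst y \<and> (snd y = Suc (snd x) \<or> snd x = Suc (snd y))) \<or>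
                 (snd x = snd y \<and> (fst y = Suc (fst x) \<or> fst x = Suc (fst y)))"

lemma succ_upt: "successively (\<lambda>x y. y = Suc x) [a..<b]"
  by (auto simp: successively_conv_nth)

lemma seg_props:
  "seg a b \<noteq> []" "hd (seg a b) = a" "last (seg a b) = b" "length (seg a b) = Suc (dst a b)"
  "set (seg a b) = {min a b..max a b}"
  "successively (\<lambda>x y. y = Suc x \<or> x = Suc y) (seg a b)"
proof -
  show "seg a b \<noteq> []" "hd (seg a b) = a" "last (seg a b) = b" "length (seg a b) = Suc (dst a b)"
    "set (seg a b) = {min a b..max a b}"
    by (auto simp: seg_def dst_def hd_rev last_rev hd_upt simp del: upt_Suc)
  show "successively (\<lambda>x y. y = Suc x \<or> x = Suc y) (seg a b)"
  proof (cases "a \<le> b")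
    case True
    then have e: "seg a b = [a..<Suc b]" by (simp add: seg_def del: upt_Suc)
    show ?thesis unfolding e by (rule successively_mono[OF succ_upt]) auto
  next
    case False
    then have e: "seg a b = rev [b..<Suc a]" by (simp add: seg_def del: upt_Suc)
    show ?thesis unfolding e successively_rev by (rule successively_mono[OF succ_upt]) auto
  qed
qed

fun tp :: "nat \<times> nat \<Rightarrow> nat \<times> nat \<Rightarrow> (nat \<times> nat) list" where
  "tp (h, j) (h', j') = (if h = h' then map (\<lambda>t. (h, t)) (seg j j')
     else map (\<lambda>t. (h, t)) (seg j 0) @ tl (map (\<lambda>t. (t, 0)) (seg h h')) @ tl (map (\<lambda>t. (h', t)) (seg 0 j')))"

fun tpd :: "nat \<times> nat \<Rightarrow> nat \<times> nat \<Rightarrow> nat" where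
  "tpd (h, j) (h', j') = (if h = h' then dst j j' else j + dst h h' + j')"

lemma succ_app_tl:
  assumes "successively R xs" "successively R ys" "xs \<noteq> []" "ys \<noteq> []" "last xs = hd ys"
  shows "successively R (xs @ tl ys)"
proof (cases ys)
  case Nil then show ?thesis using assms by simp
next
  case (Cons y ys')
  then show ?thesis using assms
    by (cases ys') (auto simp: successively_append_iff successively_Cons)
qed

lemma tp_props:
  "tp x y \<noteq> []" "hd (tp x y) = x" "last (tp x y) = y" "length (tp x y) = Suc (tpd x y)"
  "successively nadj (tp x y)"
proof -
  obtain h j h' j' where xy: "x = (h, j)" "y = (h', j')" by (cases x, cases y) auto
  have A: "successively nadj (map (\<lambda>t. (h, t)) (seg a b))" for h a b
    unfolding successively_map by (rule successively_mono[OF seg_props(6)]) (auto simp: nadj_def)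
  have B: "successively nadj (map (\<lambda>t. (t, 0)) (seg a b))" for a b
    unfolding successively_map by (rule successively_mono[OF seg_props(6)]) (auto simp: nadj_def)
  have tlne: "tl (map f (seg a b)) \<noteq> [] \<longleftrightarrow> a \<noteq> b" for f :: "nat \<Rightarrow> nat \<times> nat" and a b
    using seg_props(4)[of a b] by (auto simp: dst_def simp flip: length_0_conv)
  show "tp x y \<noteq> []" using seg_props(1) by (simp add: xy)
  show "hd (tp x y) = x" using seg_props(1,2) by (simp add: xy hd_map)
  show "last (tp x y) = y"
  proof (cases "h = h'")
    case True then show ?thesis using seg_props(1,3) by (simp add: xy last_map)
  next
    case False
    show ?thesis
    proof (cases "j' = 0")
      case True
      then show ?thesis using False seg_props(1,3)[of h h'] tlne[of "\<lambda>t. (t, 0)" h h']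
        by (simp add: xy last_map last_tl seg_def)
    next
      case F2: False
      then show ?thesis using False seg_props(1,3)[of 0 j'] tlne[of "\<lambda>t. (h', t)" 0 j']
        by (simp add: xy last_map last_tl)
    qed
  qed
  show "length (tp x y) = Suc (tpd x y)"
    using seg_props(4) by (simp add: xy dst_def)
  show "successively nadj (tp x y)"
  proof (cases "h = h'")
    case True then show ?thesis using A by (simp add: xy)
  next
    case False
    have s1: "successively nadj (map (\<lambda>t. (h, t)) (seg j 0) @ tl (map (\<lambda>t. (t, 0)) (seg h h')))"
      by (rule succ_app_tl[OF A B]) (use seg_props(1,2,3) in \<open>auto simp: last_map hd_map\<close>)
    have s2: "successively nadj ((map (\<lambda>t. (h, t)) (seg j 0) @ tl (map (\<lambda>t. (t, 0)) (seg h h'))) @ tl (map (\<lambda>t. (h', t)) (seg 0 j')))"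
    proof (rule succ_app_tl[OF s1 A])
      show "map (\<lambda>t. (h, t)) (seg j 0) @ tl (map (\<lambda>t. (t, 0)) (seg h h')) \<noteq> []"
        using seg_props(1) by simp
      show "map (\<lambda>t. (h', t)) (seg 0 j') \<noteq> []" using seg_props(1) by simp
      show "last (map (\<lambda>t. (h, t)) (seg j 0) @ tl (map (\<lambda>t. (t, 0)) (seg h h'))) =
            hd (map (\<lambda>t. (h', t)) (seg 0 j'))"
        using False seg_props(1,2,3)[of h h'] tlne[of "\<lambda>t. (t, 0)" h h'] seg_props(1,2)[of 0 j']
        by (simp add: last_map hd_map last_tl)
    qed
    then show ?thesis using False by (simp add: xy)
  qed
qed


lemma in_tl: "z \<in> set (tl xs) \<Longrightarrow> z \<in> set xs"
  by (cases xs) auto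

lemma tp_set:
  assumes "z \<in> set (tp x y)"
  shows "(fst z = fst x \<and> snd z \<le> snd x) \<or> (fst z = fst y \<and> snd z \<le> snd y) \<or>
         (snd z = 0 \<and> min (fst x) (fst y) \<le> fst z \<and> fst z \<le> max (fst x) (fst y))"
proof -
  obtain h j h' j' where xy: "x = (h, j)" "y = (h', j')" by (cases x, cases y) auto
  show ?thesis
  proof (cases "h = h'")
    case True
    then show ?thesis using assms seg_props(5) by (auto simp: xy)
  next
    case False
    then have "z \<in> set (map (\<lambda>t. (h, t)) (seg j 0)) \<or> z \<in> set (map (\<lambda>t. (t, 0)) (seg h h'))
       \<or> z \<in> set (map (\<lambda>t. (h', t)) (seg 0 j'))"
      using assms by (auto simp: xy dest: in_tl)
    then show ?thesis using seg_props(5) by (auto simp: xy)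
  qed
qed

fun walkZ :: "(nat \<times> nat) list \<Rightarrow> (nat \<times> nat) list" where
  "walkZ [] = []"
| "walkZ [x] = [x]"
| "walkZ (x # y # zs) = tp x y @ tl (walkZ (y # zs))"

fun zlen :: "(nat \<times> nat) list \<Rightarrow> nat" where
  "zlen (x # y # zs) = tpd x y + zlen (y # zs)"
| "zlen _ = 0"

lemma walkZ_props:
  "zs \<noteq> [] \<Longrightarrow> walkZ zs \<noteq> [] \<and> hd (walkZ zs) = hd zs \<and> last (walkZ zs) = last zs \<and>
     successively nadj (walkZ zs) \<and> length (walkZ zs) = Suc (zlen zs) \<and> set zs \<subseteq> set (walkZ zs)"
proof (induction zs rule: walkZ.induct)
  case 1 then show ?case by simp
next
  case (2 x) then show ?case by simp
next
  case (3 x y zs)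
  then have IH: "walkZ (y # zs) \<noteq> []" "hd (walkZ (y # zs)) = y" "last (walkZ (y # zs)) = last (y # zs)"
     "successively nadj (walkZ (y # zs))" "length (walkZ (y # zs)) = Suc (zlen (y # zs))"
     "set (y # zs) \<subseteq> set (walkZ (y # zs))" by auto
  have s: "successively nadj (walkZ (x # y # zs))"
    using succ_app_tl[OF tp_props(5) IH(4) tp_props(1) IH(1)] tp_props(3) IH(2) by simp
  have l: "last (walkZ (x # y # zs)) = last (x # y # zs)"
  proof (cases "tl (walkZ (y # zs)) = []")
    case True
    then have "walkZ (y # zs) = [y]" using IH(1,2) by (cases "walkZ (y # zs)") auto
    then have "last (y # zs) = y" using IH(3) by simp
    then show ?thesis using True tp_props(3) by simp
  next
    case False
    then show ?thesis using IH(3) by (simp add: last_tl)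
  qed
  have st: "set (walkZ (y # zs)) = insert y (set (tl (walkZ (y # zs))))"
    using IH(1,2) by (cases "walkZ (y # zs)") auto
  have "set (x # y # zs) \<subseteq> set (walkZ (x # y # zs))"
  proof -
    have hx: "x \<in> set (tp x y)" by (metis hd_in_set tp_props(1,2))
    have hy: "y \<in> set (tp x y)" by (metis last_in_set tp_props(1,3))
    show ?thesis using IH(6) st hx hy by auto
  qed
  then show ?case using s l IH tp_props(1,2,4)[of x y]
    by (cases "walkZ (y # zs)") auto
qed

lemma walkZ_set:
  "successively (\<lambda>a b. set (tp a b) \<subseteq> A) zs \<Longrightarrow> set zs \<subseteq> A \<Longrightarrow> set (walkZ zs) \<subseteq> A"
proof (induction zs rule: walkZ.induct)
  case (3 x y zs)
  then show ?case by (auto dest: in_tl)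
qed auto

definition dd :: "nat \<times> nat \<Rightarrow> nat" where "dd x = fst x + snd x"

lemma tpd_0: "tpd (0, 0) x = dd x" "tpd x (0, 0) = dd x"
  by (cases x; simp add: dd_def dst_def)+

lemma pileok_app:
  assumes "pileok D p W" "W \<noteq> []" "last W = p" "t \<noteq> []" "hd t = p" "card (set t - set W) \<le> D"
  shows "pileok D p (W @ tl t)"
  unfolding pileok_def
proof (intro allI impI)
  fix i assume i: "Suc i < length (W @ tl t)"
  show "\<exists>j\<le>i. (W @ tl t) ! j = p \<and>
          card (set (take (Suc (Suc i)) (W @ tl t)) - set (take (Suc j) (W @ tl t))) \<le> D"
  proof (cases "Suc i < length W")
    case True
    then obtain j where j: "j \<le> i" "W ! j = p"
      "card (set (take (Suc (Suc i)) W) - set (take (Suc j) W)) \<le> D"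
      using assms(1) unfolding pileok_def by blast
    then show ?thesis using True
      by (intro exI[of _ j]) (auto simp: nth_append)
  next
    case False
    define j where "j = length W - 1"
    have jl: "j < length W" "j \<le> i" using assms(2) False by (auto simp: j_def)
    have Wj: "(W @ tl t) ! j = p" using jl assms(2,3) by (simp add: nth_append j_def last_conv_nth)
    have tj: "take (Suc j) (W @ tl t) = W" using assms(2) by (simp add: j_def)
    have "set (take (Suc (Suc i)) (W @ tl t)) \<subseteq> set W \<union> set t"
      using set_take_subset[of "Suc (Suc i)" "W @ tl t"] by (auto dest: in_tl)
    then have "set (take (Suc (Suc i)) (W @ tl t)) - set W \<subseteq> set t - set W" by auto
    then have "card (set (take (Suc (Suc i)) (W @ tl t)) - set W) \<le> card (set t - set W)"
      by (intro card_mono) auto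
    then show ?thesis using jl Wj tj assms(6) by (intro exI[of _ j]) auto
  qed
qed


context
  fixes w :: "nat \<Rightarrow> nat"
  assumes wpos: "\<And>t. 0 < w t"
begin

definition nxt :: "nat \<times> nat \<Rightarrow> nat \<times> nat" where
  "nxt x = (if Suc (snd x) < w (fst x) then (fst x, Suc (snd x)) else (Suc (fst x), 0))"

definition un :: "nat \<Rightarrow> nat \<times> nat" where "un i = (nxt ^^ i) (0, 0)"

definition rank :: "nat \<times> nat \<Rightarrow> nat" where "rank x = (\<Sum>t<fst x. w t) + snd x"

lemma un_0: "un 0 = (0, 0)" by (simp add: un_def)
lemma un_Suc: "un (Suc i) = nxt (un i)" by (simp add: un_def)

lemma un_in: "snd (un i) < w (fst (un i))"
  by (induction i) (auto simp: un_0 un_Suc nxt_def wpos)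

lemma rank_un: "rank (un i) = i"
proof (induction i)
  case 0 then show ?case by (simp add: un_0 rank_def)
next
  case (Suc i)
  have "snd (un i) < w (fst (un i))" by (rule un_in)
  then show ?case using Suc by (auto simp: un_Suc nxt_def rank_def)
qed

lemma rank_lt: "snd x < w (fst x) \<Longrightarrow> fst x < fst y \<Longrightarrow> rank x < rank y"
proof -
  assume a: "snd x < w (fst x)" "fst x < fst y"
  have "rank x < (\<Sum>t<Suc (fst x). w t)" using a by (simp add: rank_def)
  also have "\<dots> \<le> (\<Sum>t<fst y. w t)" using a by (intro sum_mono2) auto
  also have "\<dots> \<le> rank y" by (simp add: rank_def)
  finally show ?thesis .
qed

lemma rank_mono0: "a \<le> b \<Longrightarrow> rank (a, 0) \<le> rank (b, 0)"
  by (simp add: rank_def sum_mono2)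

lemma rank_inj: "snd x < w (fst x) \<Longrightarrow> snd y < w (fst y) \<Longrightarrow> rank x = rank y \<Longrightarrow> x = y"
  by (metis rank_lt less_irrefl linorder_neqE_nat rank_def add_left_cancel prod.expand)

lemma un_rank: "snd x < w (fst x) \<Longrightarrow> un (rank x) = x"
  using rank_inj[OF un_in _ ] rank_un by metis

lemma un_inj: "un i = un k \<Longrightarrow> i = k"
  by (metis rank_un)

lemma un_ne0: "0 < i \<Longrightarrow> un i \<noteq> (0, 0)"
  by (metis rank_un un_0 less_irrefl)

lemma dd_nxt: "dd (nxt x) \<le> Suc (dd x)" by (auto simp: nxt_def dd_def)

lemma tpd_nxt: "tpd x (nxt x) + dd (nxt x) \<le> dd x + 2"
  by (cases x) (auto simp: nxt_def dd_def dst_def)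

lemma dd_un: "i \<le> k \<Longrightarrow> dd (un k) \<le> dd (un i) + (k - i)"
proof (induction k)
  case 0 then show ?case by simp
next
  case (Suc k)
  show ?case
  proof (cases "i = Suc k")
    case True then show ?thesis by simp
  next
    case False
    then have "i \<le> k" using Suc by simp
    then show ?thesis using Suc dd_nxt[of "un k"] by (simp add: un_Suc)
  qed
qed

lemma dd_un1: "0 < i \<Longrightarrow> 1 \<le> dd (un i)"
  using un_ne0[of i] by (cases "un i") (auto simp: dd_def)


lemma succ_all: "(\<forall>x\<in>set zs. \<forall>y\<in>set zs. R x y) \<Longrightarrow> successively R zs"
  by (induction R zs rule: successively.induct) auto

lemma tp_A:
  assumes "snd x < w (fst x)" "rank x \<le> b" "snd y < w (fst y)" "rank y \<le> b"
  shows "set (tp x y) \<subseteq> {z. snd z < w (fst z) \<and> rank z \<le> b}"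
proof
  fix z assume z: "z \<in> set (tp x y)"
  have rx: "rank (fst x, 0) \<le> rank x" "rank (fst y, 0) \<le> rank y" by (auto simp: rank_def)
  from tp_set[OF z] show "z \<in> {z. snd z < w (fst z) \<and> rank z \<le> b}"
  proof (elim disjE conjE)
    assume "fst z = fst x" "snd z \<le> snd x"
    then show ?thesis using assms by (auto simp: rank_def)
  next
    assume "fst z = fst y" "snd z \<le> snd y"
    then show ?thesis using assms by (auto simp: rank_def)
  next
    assume a: "snd z = 0" "min (fst x) (fst y) \<le> fst z" "fst z \<le> max (fst x) (fst y)"
    have "rank z = rank (fst z, 0)" using a by (simp add: rank_def)
    also have "\<dots> \<le> rank (max (fst x) (fst y), 0)" using a(3) by (rule rank_mono0)
    also have "\<dots> \<le> b" using rx assms by (cases "fst x \<le> fst y") (auto simp: max_def)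
    finally show ?thesis using a wpos by simp
  qed
qed

definition trip :: "nat \<Rightarrow> nat \<Rightarrow> (nat \<times> nat) list" where
  "trip a b = walkZ ((0, 0) # map un [Suc a..<Suc b] @ [(0, 0)])"

lemma zlen_tail: "i \<le> b \<Longrightarrow> zlen (map un [i..<Suc b] @ [(0, 0)]) + 2 * i \<le> dd (un i) + 2 * b"
proof (induction "b - i" arbitrary: i)
  case 0
  then have "i = b" by simp
  then show ?case by (simp add: tpd_0)
next
  case (Suc k)
  then have ib: "i < b" by simp
  have e: "map un [i..<Suc b] @ [(0, 0)] = un i # (map un [Suc i..<Suc b] @ [(0, 0)])"
    using ib by (simp add: upt_rec)
  have e2: "map un [Suc i..<Suc b] @ [(0, 0)] = un (Suc i) # (map un [Suc (Suc i)..<Suc b] @ [(0, 0)])"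
    using ib by (simp add: upt_rec)
  have IH: "zlen (map un [Suc i..<Suc b] @ [(0, 0)]) + 2 * Suc i \<le> dd (un (Suc i)) + 2 * b"
    using Suc.hyps(1)[of "Suc i"] Suc.hyps(2) ib by (simp del: upt_Suc)
  have "zlen (map un [i..<Suc b] @ [(0, 0)]) = tpd (un i) (un (Suc i)) + zlen (map un [Suc i..<Suc b] @ [(0, 0)])"
    unfolding e by (simp only: e2 zlen.simps)
  then show ?case using IH tpd_nxt[of "un i"] by (simp add: un_Suc)
qed

definition Sd :: "nat \<Rightarrow> nat" where "Sd a = (\<Sum>i\<in>{1..a}. 1 + dd (un i))"

lemma trip_props:
  assumes ab: "a < b"
  shows "trip a b \<noteq> []" "hd (trip a b) = (0, 0)" "last (trip a b) = (0, 0)"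
    "successively nadj (trip a b)"
    "length (trip a b) = Suc (zlen ((0, 0) # map un [Suc a..<Suc b] @ [(0, 0)]))"
    "zlen ((0, 0) # map un [Suc a..<Suc b] @ [(0, 0)]) + 2 * Suc a \<le> 2 * dd (un (Suc a)) + 2 * b"
    "1 \<le> zlen ((0, 0) # map un [Suc a..<Suc b] @ [(0, 0)])"
    "set (trip a b) \<subseteq> un ` {..b}" "un ` {..b} - un ` {..a} \<subseteq> set (trip a b)"
proof -
  define Z where "Z = (0::nat, 0::nat) # map un [Suc a..<Suc b] @ [(0, 0)]"
  have Z: "Z \<noteq> []" "hd Z = (0, 0)" "last Z = (0, 0)" by (auto simp: Z_def)
  note wp = walkZ_props[OF Z(1)]
  show "trip a b \<noteq> []" "hd (trip a b) = (0, 0)" "last (trip a b) = (0, 0)"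
    "successively nadj (trip a b)"
    "length (trip a b) = Suc (zlen ((0, 0) # map un [Suc a..<Suc b] @ [(0, 0)]))"
    using wp Z by (auto simp: trip_def Z_def)
  have e: "map un [Suc a..<Suc b] @ [(0, 0)] = un (Suc a) # (map un [Suc (Suc a)..<Suc b] @ [(0, 0)])"
    using ab by (simp add: upt_rec)
  have zl: "zlen Z = dd (un (Suc a)) + zlen (map un [Suc a..<Suc b] @ [(0, 0)])"
    unfolding Z_def by (simp only: e zlen.simps tpd_0)
  show "zlen ((0, 0) # map un [Suc a..<Suc b] @ [(0, 0)]) + 2 * Suc a \<le> 2 * dd (un (Suc a)) + 2 * b"
    using zl zlen_tail[of "Suc a" b] ab by (simp add: Z_def)
  show "1 \<le> zlen ((0, 0) # map un [Suc a..<Suc b] @ [(0, 0)])"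
    using zl dd_un1[of "Suc a"] by (simp add: Z_def)
  define A where "A = {z. snd z < w (fst z) \<and> rank z \<le> b}"
  have ZA: "set Z \<subseteq> A" using un_in rank_un wpos by (auto simp: Z_def A_def rank_def)
  have "set (walkZ Z) \<subseteq> A"
  proof (rule walkZ_set[OF succ_all ZA], intro ballI)
    fix x y assume "x \<in> set Z" "y \<in> set Z"
    then have "x \<in> A" "y \<in> A" using ZA by auto
    then show "set (tp x y) \<subseteq> A" unfolding A_def using tp_A[of x b y] by simp
  qed
  moreover have "A \<subseteq> un ` {..b}"
  proof
    fix z assume "z \<in> A"
    then show "z \<in> un ` {..b}" using un_rank[of z] by (auto simp: A_def intro!: image_eqI[of z un "rank z"])
  qed
  ultimately show "set (trip a b) \<subseteq> un ` {..b}" by (auto simp: trip_def Z_def)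
  have "un ` {..b} - un ` {..a} \<subseteq> set Z"
  proof
    fix z assume "z \<in> un ` {..b} - un ` {..a}"
    then obtain i where i: "i \<le> b" "\<not> i \<le> a" "z = un i" by auto
    then have "i \<in> set [Suc a..<Suc b]" by auto
    then show "z \<in> set Z" using i by (auto simp: Z_def simp del: upt_Suc)
  qed
  then show "un ` {..b} - un ` {..a} \<subseteq> set (trip a b)" using wp unfolding trip_def Z_def[symmetric] by blast
qed


definition InvW :: "nat \<Rightarrow> nat \<Rightarrow> (nat \<times> nat) list \<Rightarrow> bool" where
  "InvW D a W \<longleftrightarrow> W \<noteq> [] \<and> hd W = (0, 0) \<and> last W = (0, 0) \<and> successively nadj W \<and>
     set W = un ` {..a} \<and> pileok D (0, 0) W \<and>
     D * (length W - 1) + 2 * D * dd (un (Suc a)) \<le> 2 * Sd a + 4 * D * a + 2 * D"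

definition FinW :: "nat \<Rightarrow> nat \<Rightarrow> (nat \<times> nat) list \<Rightarrow> bool" where
  "FinW D m W \<longleftrightarrow> W \<noteq> [] \<and> hd W = (0, 0) \<and> last W = (0, 0) \<and> successively nadj W \<and>
     set W = un ` {..m} \<and> pileok D (0, 0) W \<and> D * (length W - 1) \<le> 2 * Sd m + 4 * D * m"

lemma app_common:
  assumes I: "InvW D a W" and ab: "a < b" "b \<le> a + D"
  defines "W' \<equiv> W @ tl (trip a b)"
  shows "W' \<noteq> [] \<and> hd W' = (0, 0) \<and> last W' = (0, 0) \<and> successively nadj W' \<and>
     set W' = un ` {..b} \<and> pileok D (0, 0) W' \<and>
     length W' - 1 = (length W - 1) + zlen ((0, 0) # map un [Suc a..<Suc b] @ [(0, 0)])"
proof -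
  define T where "T = trip a b"
  define Z where "Z = zlen ((0, 0) # map un [Suc a..<Suc b] @ [(0, 0)])"
  note tpr = trip_props[OF ab(1), folded T_def Z_def]
  have W: "W \<noteq> []" "hd W = (0, 0)" "last W = (0, 0)" "successively nadj W" "set W = un ` {..a}"
    "pileok D (0, 0) W" using I by (auto simp: InvW_def)
  have tlT: "tl T \<noteq> []" using tpr(5,7) by (cases T) auto
  have ne: "W' \<noteq> []" using W by (simp add: W'_def)
  have hd: "hd W' = (0, 0)" using W by (simp add: W'_def)
  have la: "last W' = (0, 0)" using tlT tpr(3) by (simp add: W'_def T_def[symmetric] last_tl)
  have su: "successively nadj W'" unfolding W'_def T_def[symmetric]
    by (rule succ_app_tl) (use W tpr in auto)
  have sT: "set T = insert (0, 0) (set (tl T))" using tpr(1,2) by (cases T) auto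
  have u0: "(0, 0) \<in> un ` {..a}" using un_0 by force
  have "un ` {..a} \<subseteq> un ` {..b}" using ab by auto
  then have se: "set W' = un ` {..b}" using W(5) sT u0 tpr(8,9)
    unfolding W'_def T_def[symmetric] by auto
  have "card (set T - set W) \<le> card (un ` {Suc a..b})"
  proof (rule card_mono)
    show "set T - set W \<subseteq> un ` {Suc a..b}"
      using tpr(8) W(5) by (force simp: not_le)
  qed simp
  also have "\<dots> \<le> card {Suc a..b}" by (rule card_image_le) simp
  also have "\<dots> \<le> D" using ab by simp
  finally have pk: "pileok D (0, 0) W'" unfolding W'_def T_def[symmetric]
    by (intro pileok_app) (use W tpr in auto)
  obtain k where k: "length W = Suc k" using W(1) by (cases W) auto
  then have "length W' - 1 = (length W - 1) + Z" using tpr(5)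
    by (simp add: W'_def T_def[symmetric])
  then show ?thesis using ne hd la su se pk by (simp add: Z_def)
qed

lemma Sd_split: "Sd (a + D) = Sd a + (\<Sum>i\<in>{Suc a..a + D}. 1 + dd (un i))"
  unfolding Sd_def by (subst sum.ub_add_nat) auto

lemma block_bound: "D * dd (un (Suc (a + D))) \<le> (\<Sum>i\<in>{Suc a..a + D}. dd (un i)) + D * D"
proof -
  have "D * dd (un (Suc (a + D))) = (\<Sum>i\<in>{Suc a..a + D}. dd (un (Suc (a + D))))" by simp
  also have "\<dots> \<le> (\<Sum>i\<in>{Suc a..a + D}. dd (un i) + D)"
  proof (rule sum_mono)
    fix i assume i: "i \<in> {Suc a..a + D}"
    then have "dd (un (Suc (a + D))) \<le> dd (un i) + (Suc (a + D) - i)" by (intro dd_un) auto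
    then show "dd (un (Suc (a + D))) \<le> dd (un i) + D" using i by auto
  qed
  also have "\<dots> = (\<Sum>i\<in>{Suc a..a + D}. dd (un i)) + D * D" by (simp add: sum.distrib)
  finally show ?thesis .
qed

lemma full_step:
  assumes I: "InvW D a W" and D: "0 < D"
  shows "InvW D (a + D) (W @ tl (trip a (a + D)))"
proof -
  have ab: "a < a + D" "a + D \<le> a + D" using D by auto
  note C = app_common[OF I ab]
  define Z where "Z = zlen ((0, 0) # map un [Suc a..<Suc (a + D)] @ [(0, 0)])"
  define l where "l = length W - 1"
  define X where "X = dd (un (Suc a))"
  define Y where "Y = dd (un (Suc (a + D)))"
  define T1 where "T1 = (\<Sum>i\<in>{Suc a..a + D}. 1 + dd (un i))"
  define T2 where "T2 = (\<Sum>i\<in>{Suc a..a + D}. dd (un i))"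
  have F1: "D * l + 2 * D * X \<le> 2 * Sd a + 4 * D * a + 2 * D" using I by (simp add: InvW_def l_def X_def)
  have F2: "Z + 2 * Suc a \<le> 2 * X + 2 * (a + D)" using trip_props(6)[OF ab(1)] by (simp add: Z_def X_def)
  then have F2': "D * Z + 2 * (D * a) + 2 * D \<le> 2 * (D * X) + 2 * (D * a) + 2 * (D * D)"
    using mult_le_mono2[OF F2, of D] by (simp add: algebra_simps)
  have F3: "D * Y \<le> T2 + D * D" using block_bound by (simp add: Y_def T2_def)
  have T12: "T2 \<le> T1" unfolding T1_def T2_def by (rule sum_mono) simp
  have len: "length (W @ tl (trip a (a + D))) - 1 = l + Z" using C by (simp add: l_def Z_def)
  have "D * (l + Z) + 2 * D * Y \<le> 2 * Sd (a + D) + 4 * D * (a + D) + 2 * D"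
    using F1 F2' F3 T12 unfolding Sd_split T1_def[symmetric] by (simp add: algebra_simps)
  then show ?thesis using C len unfolding InvW_def Y_def by simp
qed

lemma Sd_mono: "a \<le> b \<Longrightarrow> Sd a \<le> Sd b"
  unfolding Sd_def by (rule sum_mono2) auto

lemma last_step:
  assumes I: "InvW D a W" and ab: "a < m" "m \<le> a + D"
  shows "FinW D m (W @ tl (trip a m))"
proof -
  note C = app_common[OF I ab]
  define Z where "Z = zlen ((0, 0) # map un [Suc a..<Suc m] @ [(0, 0)])"
  define l where "l = length W - 1"
  define X where "X = dd (un (Suc a))"
  have F1: "D * l + 2 * D * X \<le> 2 * Sd a + 4 * D * a + 2 * D" using I by (simp add: InvW_def l_def X_def)
  have F2: "Z + 2 * Suc a \<le> 2 * X + 2 * m" using trip_props(6)[OF ab(1)] by (simp add: Z_def X_def)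
  then have F2': "D * Z + 2 * (D * a) + 2 * D \<le> 2 * (D * X) + 2 * (D * m)"
    using mult_le_mono2[OF F2, of D] by (simp add: algebra_simps)
  have S: "Sd a \<le> Sd m" using ab by (intro Sd_mono) simp
  have am: "D * a \<le> D * m" using ab by simp
  have len: "length (W @ tl (trip a m)) - 1 = l + Z" using C by (simp add: l_def Z_def)
  have e1: "D * (l + Z) = D * l + D * Z" by (simp add: algebra_simps)
  have e2: "2 * D * X = 2 * (D * X)" "4 * D * a = 4 * (D * a)" "4 * D * m = 4 * (D * m)" by simp_all
  have "D * (l + Z) \<le> 2 * Sd m + 4 * D * m"
    using F1 F2' S am e1 e2 by linarith
  then show ?thesis using C len unfolding FinW_def by simp
qed

lemma inv_fin: "InvW D m W \<Longrightarrow> FinW D m W"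
proof -
  assume I: "InvW D m W"
  have "1 \<le> dd (un (Suc m))" by (rule dd_un1) simp
  then have "D \<le> D * dd (un (Suc m))" by simp
  then show ?thesis using I unfolding InvW_def FinW_def by linarith
qed

lemma inv0: "InvW D 0 [(0, 0)]"
proof -
  have "dd (un (Suc 0)) \<le> 1" using dd_nxt[of "(0, 0)"] by (simp add: un_Suc un_0 dd_def)
  then have "2 * D * dd (un (Suc 0)) \<le> 2 * D" by simp
  then show ?thesis by (simp add: InvW_def un_0 pileok_def Sd_def)
qed

lemma iter: "0 < D \<Longrightarrow> a \<le> m \<Longrightarrow> InvW D a W \<Longrightarrow> \<exists>W'. FinW D m W'"
proof (induction "m - a" arbitrary: a W rule: less_induct)
  case less
  show ?case
  proof (cases "a = m")
    case True then show ?thesis using inv_fin less by blast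
  next
    case False
    show ?thesis
    proof (cases "a + D \<le> m")
      case True
      have "m - (a + D) < m - a" using False less True by simp
      then show ?thesis using less.hyps[of "a + D"] full_step[OF less(4) less(2)] True less by blast
    next
      case F2: False
      then show ?thesis using last_step[OF less(4)] False less by (metis le_neq_implies_less nat_le_linear)
    qed
  qed
qed

lemma un_Cn: "un ` {..<(\<Sum>t<H. w t)} = {x. fst x < H \<and> snd x < w (fst x)}"
proof
  show "un ` {..<(\<Sum>t<H. w t)} \<subseteq> {x. fst x < H \<and> snd x < w (fst x)}"
  proof
    fix z assume "z \<in> un ` {..<(\<Sum>t<H. w t)}"
    then obtain i where i: "i < (\<Sum>t<H. w t)" "z = un i" by auto
    have "fst (un i) < H"
    proof (rule ccontr)
      assume "\<not> fst (un i) < H"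
      then have "(\<Sum>t<H. w t) \<le> (\<Sum>t<fst (un i). w t)" by (intro sum_mono2) auto
      also have "\<dots> \<le> rank (un i)" by (simp add: rank_def)
      finally show False using i rank_un[of i] by simp
    qed
    then show "z \<in> {x. fst x < H \<and> snd x < w (fst x)}" using i un_in by auto
  qed
next
  show "{x. fst x < H \<and> snd x < w (fst x)} \<subseteq> un ` {..<(\<Sum>t<H. w t)}"
  proof
    fix x assume x: "x \<in> {x. fst x < H \<and> snd x < w (fst x)}"
    then have "rank x < rank (H, 0)" by (intro rank_lt) auto
    then have "rank x < (\<Sum>t<H. w t)" by (simp add: rank_def)
    then show "x \<in> un ` {..<(\<Sum>t<H. w t)}" using un_rank[of x] x
      by (intro image_eqI[of x un "rank x"]) auto
  qed
qed

lemma norm_final: "0 < D \<Longrightarrow> \<exists>W. FinW D m W"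
  using iter[of D 0 m "[(0, 0)]"] inv0 by simp

end

lemma comb_gen:
  fixes px py Hi :: int and a :: "int \<Rightarrow> int" and \<sigma> \<tau> :: int
  assumes s: "\<sigma> = 1 \<or> \<sigma> = -1" and t: "\<tau> = 1 \<or> \<tau> = -1" and H: "1 \<le> Hi"
    and C: "C = {(x, y). 0 \<le> \<tau> * (y - py) \<and> \<tau> * (y - py) \<le> Hi - 1 \<and> 0 \<le> \<sigma> * (x - px) \<and>
                 \<sigma> * (x - px) \<le> \<sigma> * (a y - px)}"
    and A: "\<forall>y. 0 \<le> \<tau> * (y - py) \<and> \<tau> * (y - py) \<le> Hi - 1 \<longrightarrow> 0 \<le> \<sigma> * (a y - px)"
  shows "C = (\<lambda>v. (px + \<sigma> * int (snd v), py + \<tau> * int (fst v))) `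
     {v. fst v < nat Hi \<and> snd v < nat (\<sigma> * (a (py + \<tau> * int (fst v)) - px)) + 1}" (is "C = ?R")
proof
  show "C \<subseteq> ?R"
  proof
    fix q assume "q \<in> C"
    then obtain x y where q: "q = (x, y)" and c: "0 \<le> \<tau> * (y - py)" "\<tau> * (y - py) \<le> Hi - 1"
      "0 \<le> \<sigma> * (x - px)" "\<sigma> * (x - px) \<le> \<sigma> * (a y - px)" using C by auto
    have yy: "py + \<tau> * int (nat (\<tau> * (y - py))) = y" using c t by auto
    have xx: "px + \<sigma> * int (nat (\<sigma> * (x - px))) = x" using c s by auto
    show "q \<in> ?R"
      by (rule image_eqI[of _ _ "(nat (\<tau> * (y - py)), nat (\<sigma> * (x - px)))"])
         (use c yy xx q in auto)
  qed
next
  show "?R \<subseteq> C"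
  proof
    fix q assume "q \<in> ?R"
    then obtain h j where q: "q = (px + \<sigma> * int j, py + \<tau> * int h)" and hj: "h < nat Hi"
      "j < nat (\<sigma> * (a (py + \<tau> * int h) - px)) + 1" by auto
    have "0 \<le> \<sigma> * (a (py + \<tau> * int h) - px)" using A[rule_format, of "py + \<tau> * int h"] t hj by auto
    then show "q \<in> C" using s t hj by (auto simp: C q)
  qed
qed

lemma comb_norm:
  assumes "comb_with_root C p"
  shows "\<exists>\<sigma> \<tau> (H::nat) w. (\<sigma> = 1 \<or> \<sigma> = -1) \<and> (\<tau> = 1 \<or> \<tau> = -1) \<and> 1 \<le> H \<and> (\<forall>t. 0 < w t) \<and>
    C = (\<lambda>v. (fst p + \<sigma> * int (snd v), snd p + \<tau> * int (fst v))) ` {v. fst v < H \<and> snd v < w (fst v)}"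
proof -
  obtain y0 Hi c a where H: "Hi \<ge> (1::int)" and
    CC: "(C = {(x, y). y0 \<le> y \<and> y \<le> y0 + Hi - 1 \<and> a y \<le> x \<and> x \<le> c} \<and>
        (\<forall>y. y0 \<le> y \<and> y \<le> y0 + Hi - 1 \<longrightarrow> a y \<le> c)) \<or>
      (C = {(x, y). y0 \<le> y \<and> y \<le> y0 + Hi - 1 \<and> c \<le> x \<and> x \<le> a y} \<and>
        (\<forall>y. y0 \<le> y \<and> y \<le> y0 + Hi - 1 \<longrightarrow> c \<le> a y))" and
    P: "p = (c, y0) \<or> p = (c, y0 + Hi - 1)"
    using assms unfolding comb_with_root_def by blast
  have main: "\<exists>\<sigma> \<tau> (H::nat) w. (\<sigma> = 1 \<or> \<sigma> = -1) \<and> (\<tau> = 1 \<or> \<tau> = -1) \<and> 1 \<le> H \<and> (\<forall>t. 0 < w t) \<and>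
    C = (\<lambda>v. (fst p + \<sigma> * int (snd v), snd p + \<tau> * int (fst v))) ` {v. fst v < H \<and> snd v < w (fst v)}"
    if s: "\<sigma> = 1 \<or> \<sigma> = -1" and t: "\<tau> = 1 \<or> \<tau> = -1"
     and C: "C = {(x, y). 0 \<le> \<tau> * (y - snd p) \<and> \<tau> * (y - snd p) \<le> Hi - 1 \<and> 0 \<le> \<sigma> * (x - fst p) \<and>
                 \<sigma> * (x - fst p) \<le> \<sigma> * (a y - fst p)}"
     and A: "\<forall>y. 0 \<le> \<tau> * (y - snd p) \<and> \<tau> * (y - snd p) \<le> Hi - 1 \<longrightarrow> 0 \<le> \<sigma> * (a y - fst p)" for \<sigma> \<tau>
    using comb_gen[OF s t H C A] s t H
    by (intro exI[of _ \<sigma>] exI[of _ \<tau>] exI[of _ "nat Hi"]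
        exI[of _ "\<lambda>h. nat (\<sigma> * (a (snd p + \<tau> * int h) - fst p)) + 1"]) auto
  from CC P show ?thesis
  proof (elim disjE conjE)
    assume C: "C = {(x, y). y0 \<le> y \<and> y \<le> y0 + Hi - 1 \<and> a y \<le> x \<and> x \<le> c}"
      and A: "\<forall>y. y0 \<le> y \<and> y \<le> y0 + Hi - 1 \<longrightarrow> a y \<le> c" and p: "p = (c, y0)"
    show ?thesis by (rule main[of "-1" 1]) (use A in \<open>auto simp: C p\<close>)
  next
    assume C: "C = {(x, y). y0 \<le> y \<and> y \<le> y0 + Hi - 1 \<and> a y \<le> x \<and> x \<le> c}"
      and A: "\<forall>y. y0 \<le> y \<and> y \<le> y0 + Hi - 1 \<longrightarrow> a y \<le> c" and p: "p = (c, y0 + Hi - 1)"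
    show ?thesis by (rule main[of "-1" "-1"]) (use A in \<open>auto simp: C p\<close>)
  next
    assume C: "C = {(x, y). y0 \<le> y \<and> y \<le> y0 + Hi - 1 \<and> c \<le> x \<and> x \<le> a y}"
      and A: "\<forall>y. y0 \<le> y \<and> y \<le> y0 + Hi - 1 \<longrightarrow> c \<le> a y" and p: "p = (c, y0)"
    show ?thesis by (rule main[of 1 1]) (use A in \<open>auto simp: C p\<close>)
  next
    assume C: "C = {(x, y). y0 \<le> y \<and> y \<le> y0 + Hi - 1 \<and> c \<le> x \<and> x \<le> a y}"
      and A: "\<forall>y. y0 \<le> y \<and> y \<le> y0 + Hi - 1 \<longrightarrow> c \<le> a y" and p: "p = (c, y0 + Hi - 1)"
    show ?thesis by (rule main[of 1 "-1"]) (use A in \<open>auto simp: C p\<close>)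
  qed
qed


lemma pileok_map:
  assumes "inj f" "pileok D p W"
  shows "pileok D (f p) (map f W)"
  unfolding pileok_def
proof (intro allI impI)
  fix i assume i: "Suc i < length (map f W)"
  then obtain j where j: "j \<le> i" "W ! j = p"
    "card (set (take (Suc (Suc i)) W) - set (take (Suc j) W)) \<le> D"
    using assms(2) unfolding pileok_def by auto
  have "set (take (Suc (Suc i)) (map f W)) - set (take (Suc j) (map f W)) =
        f ` (set (take (Suc (Suc i)) W) - set (take (Suc j) W))"
    using assms(1) by (simp add: take_map image_set_diff)
  then have "card (set (take (Suc (Suc i)) (map f W)) - set (take (Suc j) (map f W))) \<le> D"
    using j(3) card_image_le[of "set (take (Suc (Suc i)) W) - set (take (Suc j) W)" f] by simp
  moreover have "map f W ! j = f p" using j i by simp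
  ultimately show "\<exists>j\<le>i. map f W ! j = f p \<and>
       card (set (take (Suc (Suc i)) (map f W)) - set (take (Suc j) (map f W))) \<le> D"
    using j by blast
qed

theorem lemma4:
  fixes P C :: "pixel set" and p :: pixel and D :: nat and s0 :: "pixel \<Rightarrow> nat"
  assumes "domain P"
    and "D \<ge> 2"
    and "C \<subseteq> P"
    and "comb_with_root C p"
    and "boundary_pixel P p"
    and "\<forall>q\<in>C. int (vdist P q) = 1 + \<bar>fst q - fst p\<bar> + \<bar>snd q - snd p\<bar>"
    and "\<forall>q\<in>C - {p}. s0 q = 1"
    and "s0 p = 0"
    and "\<forall>q\<in>P. s0 q \<le> D"
  shows "\<exists>n pos tgt snow.
           valid_run P D n pos tgt snow \<and>
           pos 0 = p \<and> snow 0 = s0 \<and>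
           (\<forall>i<n. pos (Suc i) \<in> C \<and> (tgt i \<in> C \<or> tgt i \<notin> P)) \<and>
           pos n = p \<and> (\<forall>q\<in>C. snow n q = 0) \<and>
           real n \<le> (let \<Delta> = (\<Sum>q\<in>C - {p}. real (vdist P q)) / real D in
                      if D \<ge> 4 then 4 * real (card (C - {p})) + 4 * \<Delta>
                      else 4 * real (card (C - {p})) + 2 * \<Delta>)"
proof -
  obtain \<sigma> \<tau> H w where st: "\<sigma> = 1 \<or> \<sigma> = -1" "\<tau> = 1 \<or> \<tau> = -1" and H: "1 \<le> H"
    and wp: "\<forall>t. 0 < w t"
    and Ceq: "C = (\<lambda>v. (fst p + \<sigma> * int (snd v), snd p + \<tau> * int (fst v))) `
                 {v. fst v < H \<and> snd v < w (fst v)}"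
    using comb_norm[OF assms(4)] by blast
  define \<phi> where "\<phi> = (\<lambda>v::nat \<times> nat. (fst p + \<sigma> * int (snd v), snd p + \<tau> * int (fst v)))"
  define Cn where "Cn = {v::nat \<times> nat. fst v < H \<and> snd v < w (fst v)}"
  have C: "C = \<phi> ` Cn" using Ceq by (simp add: \<phi>_def Cn_def)
  have wpos: "\<And>t. 0 < w t" using wp by blast
  define N where "N = (\<Sum>t<H. w t)"
  define m where "m = N - 1"
  have "w 0 \<le> N" unfolding N_def using H by (intro member_le_sum) auto
  then have N1: "1 \<le> N" using wpos[of 0] by simp
  have lm: "{..<N} = {..m}" using N1 by (auto simp: m_def)
  have Cn_un: "Cn = un w ` {..m}" using un_Cn[where w=w and H=H, OF wpos] lm unfolding Cn_def N_def by simp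
  have D0: "0 < D" using assms(2) by simp
  obtain Wn where F: "FinW w D m Wn" using norm_final[where w=w, OF wpos D0] by blast
  have Wn: "Wn \<noteq> []" "hd Wn = (0, 0)" "last Wn = (0, 0)" "successively nadj Wn"
    "set Wn = un w ` {..m}" "pileok D (0, 0) Wn" "D * (length Wn - 1) \<le> 2 * Sd w m + 4 * D * m"
    using F unfolding FinW_def[where w=w, OF wpos] by auto
  have inj: "inj \<phi>"
  proof (rule injI)
    fix x y assume "\<phi> x = \<phi> y"
    then have "\<sigma> * int (snd x) = \<sigma> * int (snd y)" "\<tau> * int (fst x) = \<tau> * int (fst y)"
      by (auto simp: \<phi>_def)
    then show "x = y" using st by (auto simp: prod_eq_iff)
  qed
  have phi0: "\<phi> (0, 0) = p" by (simp add: \<phi>_def)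
  have phi_adj: "adj (\<phi> x) (\<phi> y)" if "nadj x y" for x y
    using that st by (auto simp: \<phi>_def adj_def nadj_def)
  have phi_d: "\<bar>fst (\<phi> x) - fst p\<bar> + \<bar>snd (\<phi> x) - snd p\<bar> = int (dd x)" for x
    using st by (auto simp: \<phi>_def dd_def abs_mult)
  obtain r where r: "adj p r" "r \<notin> P" using assms(5) by (auto simp: boundary_pixel_def)
  define W where "W = map \<phi> Wn"
  have W: "W \<noteq> []" "W ! 0 = p" "last W = p" using Wn phi0
    by (auto simp: W_def hd_conv_nth[symmetric] last_map hd_map)
  have Wadj: "successively adj W" unfolding W_def successively_map
    by (rule successively_mono[OF Wn(4)]) (rule phi_adj)
  have setW: "set W = C" using Wn(5) Cn_un C by (simp add: W_def)
  have pkW: "pileok D p W" using pileok_map[OF inj Wn(6)] phi0 by (simp add: W_def)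
  have s0C: "\<forall>q\<in>C. s0 q \<le> 1" using assms(7,8) by (metis DiffI empty_iff insert_iff le_refl zero_le)
  obtain pos tgt snow where run: "valid_run P D (length W - 1) pos tgt snow" "pos 0 = p" "snow 0 = s0"
    "\<forall>i<length W - 1. pos (Suc i) \<in> C \<and> (tgt i \<in> C \<or> tgt i \<notin> P)"
    "pos (length W - 1) = p" "\<forall>q\<in>set W. snow (length W - 1) q = 0"
    using sim[OF W Wadj _ assms(3) r assms(9) assms(8) s0C pkW] setW by blast
  define n where "n = length W - 1"
  have Dn: "D * n \<le> 2 * Sd w m + 4 * D * m" using Wn(7) by (simp add: n_def W_def)
  have un0: "un w 0 = (0, 0)" by (simp add: un_def[where w=w, OF wpos])
  have injun: "inj (un w)" using un_inj[where w=w, OF wpos] by (auto intro: injI)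
  have Cn0: "Cn - {(0, 0)} = un w ` {1..m}"
  proof -
    have "Cn - {(0, 0)} = un w ` {..m} - un w ` {0}" using Cn_un un0 by simp
    also have "\<dots> = un w ` ({..m} - {0})" using injun by (simp add: image_set_diff)
    also have "{..m} - {0} = {1..m}" by auto
    finally show ?thesis .
  qed
  have Cp: "C - {p} = \<phi> ` (Cn - {(0, 0)})" using C phi0 inj by (simp add: image_set_diff)
  have card: "card (C - {p}) = m"
    unfolding Cp Cn0 using card_image[of "\<phi>" "un w ` {1..m}"] card_image[of "un w" "{1..m}"] inj injun
    by (simp add: inj_on_subset)
  have vd: "vdist P (\<phi> x) = 1 + dd x" if "x \<in> Cn" for x
  proof -
    have "\<phi> x \<in> C" using that C by simp
    then have "int (vdist P (\<phi> x)) = 1 + int (dd x)" using assms(6) phi_d[of x] by simp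
    then show ?thesis by simp
  qed
  have sum: "(\<Sum>q\<in>C - {p}. real (vdist P q)) = real (Sd w m)"
  proof -
    have "(\<Sum>q\<in>C - {p}. real (vdist P q)) = (\<Sum>x\<in>Cn - {(0, 0)}. real (vdist P (\<phi> x)))"
      unfolding Cp by (rule sum.reindex[unfolded comp_def]) (meson inj inj_on_subset subset_UNIV)
    also have "\<dots> = (\<Sum>x\<in>Cn - {(0, 0)}. real (1 + dd x))" by (rule sum.cong) (auto simp: vd)
    also have "\<dots> = (\<Sum>i\<in>{1..m}. real (1 + dd (un w i)))"
      unfolding Cn0 by (rule sum.reindex[unfolded comp_def]) (meson injun inj_on_subset subset_UNIV)
    also have "\<dots> = real (Sd w m)" by (simp add: Sd_def[where w=w, OF wpos])
    finally show ?thesis .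
  qed
  have Dr: "real D * real n \<le> 2 * real (Sd w m) + 4 * real D * real m"
    using Dn by (metis (mono_tags) of_nat_le_iff of_nat_add of_nat_mult of_nat_numeral)
  have Dp: "0 < real D" using D0 by simp
  have nb: "real n \<le> 4 * real m + 2 * (real (Sd w m) / real D)"
  proof -
    have "real n = (real D * real n) / real D" using Dp by simp
    also have "\<dots> \<le> (2 * real (Sd w m) + 4 * real D * real m) / real D"
      using Dr Dp by (intro divide_right_mono) auto
    also have "\<dots> = 4 * real m + 2 * (real (Sd w m) / real D)" using Dp by (simp add: field_simps)
    finally show ?thesis .
  qed
  have "0 \<le> real (Sd w m) / real D" by simp
  then have nb4: "real n \<le> 4 * real m + 4 * (real (Sd w m) / real D)" using nb by linarith
  have bound: "real n \<le> (let \<Delta> = (\<Sum>q\<in>C - {p}. real (vdist P q)) / real D in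
                      if D \<ge> 4 then 4 * real (card (C - {p})) + 4 * \<Delta>
                      else 4 * real (card (C - {p})) + 2 * \<Delta>)"
    using nb nb4 unfolding sum card Let_def by auto
  show ?thesis
    using run bound setW unfolding n_def[symmetric] by blast
qed

end
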